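(* (a) At an equilibrium point $D$, $\min_{S\in\mathcal C}C_S=C_{\{s_0\}}=1$. (b) A vector $D\in\mathbb R^E_{\ge0}$ is an equilibrium point if and only if $D=|Q|$ for some $s_0$-$s_1$ flow $Q$ of value $1$ with the following property: orienting every edge in the direction of $Q$ and deleting the edges with $Q_e=0$, all directed $s_0$-$s_1$ paths in the resulting directed graph have the same length. In particular, if no two distinct $s_0$-$s_1$ paths in $G$ have the same length, the equilibria are precisely the vectors that equal $1$ on the edges of a simple $s_0$-$s_1$ path and $0$ elsewhere.
   Context: Let $G=(N,E)$ be a finite connected undirected graph with two distinct vertices $s_0$ (source) and $s_1$ (sink). Each edge $e$ has a fixed length $L_e>0$ and a diameter $D_e\ge 0$; edges with $D_e=0$ are treated as absent (conductance $D_e/L_e=0$). Given $D$, the potentials $p_v$ solve $\sum_{u\in\delta(v)}(p_v-p_u)D_{uv}/L_{uv}=b_v$ with $b_{s_0}=1$, $b_{s_1}=-1$, $b_v=0$ otherwise ($\delta(v)$ the neighbours of $v$), and $Q_e=D_e(p_u-p_v)/L_e$ for $e=\{u,v\}$ with a fixed orientation $(u,v)$ (the electrical $s_0$-$s_1$ flow of value 1). $D$ is an equilibrium point of the dynamics $\dot D_e=|Q_e|-D_e$ if $D_e=|Q_e|$ for all $e$. For $S\subseteq N$, $\delta(S)$ is the set of edges with exactly one endpoint in $S$; $\mathcal C$ is the set of $S\subseteq N$ with $s_0\in S$, $s_1\notin S$; $C_S=\sum_{e\in\delta(S)}D_e$. The length of a path is the sum of $L_e$ over its edges.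
   Formalization: In (b) the $s_0$-$s_1$ flow Q of value 1 is also acyclic, so the directed graph obtained from it has no directed cycle, and G is a simple graph. Each condition added here is assumed in the paper as well or is needed for the statement above to hold. *)

theory Defs
  imports Main "HOL.Real"
begin

text \<open>Undirected simple graph on a finite vertex set V. Each edge {u,v} is stored
  once as an ordered pair (u,v), which also fixes its orientation. Functions on
  edges (lengths L, diameters D, flows Q) have type ('v \<times> 'v) \<Rightarrow> real and
  only their values on E matter.\<close>

definition bvec :: "'v \<Rightarrow> 'v \<Rightarrow> 'v \<Rightarrow> real" where
  "bvec s0 s1 v = (if v = s0 then 1 else if v = s1 then -1 else 0)"

text \<open>p solves the Kirchhoff/Laplacian system for conductances D/L.\<close>
definition is_potential ::
  "'v set \<Rightarrow> ('v \<times> 'v) set \<Rightarrow> ('v \<times> 'v \<Rightarrow> real) \<Rightarrow> ('v \<times> 'v \<Rightarrow> real)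
   \<Rightarrow> 'v \<Rightarrow> 'v \<Rightarrow> ('v \<Rightarrow> real) \<Rightarrow> bool" where
  "is_potential V E L D s0 s1 p \<longleftrightarrow>
     (\<forall>v\<in>V. (\<Sum>e\<in>{e\<in>E. fst e = v}. (p v - p (snd e)) * D e / L e)
           + (\<Sum>e\<in>{e\<in>E. snd e = v}. (p v - p (fst e)) * D e / L e) = bvec s0 s1 v)"

definition elec_flow :: "('v \<times> 'v \<Rightarrow> real) \<Rightarrow> ('v \<times> 'v \<Rightarrow> real) \<Rightarrow> ('v \<Rightarrow> real) \<Rightarrow> 'v \<times> 'v \<Rightarrow> real" where
  "elec_flow L D p e = D e * (p (fst e) - p (snd e)) / L e"

definition equilibrium ::
  "'v set \<Rightarrow> ('v \<times> 'v) set \<Rightarrow> ('v \<times> 'v \<Rightarrow> real) \<Rightarrow> 'v \<Rightarrow> 'v \<Rightarrow> ('v \<times> 'v \<Rightarrow> real) \<Rightarrow> bool" where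
  "equilibrium V E L s0 s1 D \<longleftrightarrow>
     (\<forall>e\<in>E. D e \<ge> 0) \<and>
     (\<exists>p. is_potential V E L D s0 s1 p \<and> (\<forall>e\<in>E. D e = \<bar>elec_flow L D p e\<bar>))"

definition cut_edges :: "('v \<times> 'v) set \<Rightarrow> 'v set \<Rightarrow> ('v \<times> 'v) set" where
  "cut_edges E S = {e\<in>E. (fst e \<in> S) \<noteq> (snd e \<in> S)}"

definition cut_cap :: "('v \<times> 'v) set \<Rightarrow> ('v \<times> 'v \<Rightarrow> real) \<Rightarrow> 'v set \<Rightarrow> real" where
  "cut_cap E D S = (\<Sum>e\<in>cut_edges E S. D e)"

definition st_cuts :: "'v set \<Rightarrow> 'v \<Rightarrow> 'v \<Rightarrow> 'v set set" where
  "st_cuts V s0 s1 = {S. S \<subseteq> V \<and> s0 \<in> S \<and> s1 \<notin> S}"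

definition is_unit_flow ::
  "'v set \<Rightarrow> ('v \<times> 'v) set \<Rightarrow> 'v \<Rightarrow> 'v \<Rightarrow> ('v \<times> 'v \<Rightarrow> real) \<Rightarrow> bool" where
  "is_unit_flow V E s0 s1 Q \<longleftrightarrow>
     (\<forall>v\<in>V. (\<Sum>e\<in>{e\<in>E. fst e = v}. Q e) - (\<Sum>e\<in>{e\<in>E. snd e = v}. Q e) = bvec s0 s1 v)"

definition flow_arcs :: "('v \<times> 'v) set \<Rightarrow> ('v \<times> 'v \<Rightarrow> real) \<Rightarrow> ('v \<times> 'v) set" where
  "flow_arcs E Q = {(u,v). (u,v) \<in> E \<and> Q (u,v) > 0} \<union> {(v,u). (u,v) \<in> E \<and> Q (u,v) < 0}"

definition elen :: "('v \<times> 'v) set \<Rightarrow> ('v \<times> 'v \<Rightarrow> real) \<Rightarrow> 'v \<times> 'v \<Rightarrow> real" where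
  "elen E L a = (if a \<in> E then L a else L (snd a, fst a))"

definition is_path :: "('v \<times> 'v) set \<Rightarrow> 'v \<Rightarrow> 'v \<Rightarrow> 'v list \<Rightarrow> bool" where
  "is_path R a b xs \<longleftrightarrow> xs \<noteq> [] \<and> hd xs = a \<and> last xs = b \<and> distinct xs
      \<and> set (zip xs (tl xs)) \<subseteq> R"

definition path_len :: "('v \<times> 'v) set \<Rightarrow> ('v \<times> 'v \<Rightarrow> real) \<Rightarrow> 'v list \<Rightarrow> real" where
  "path_len E L xs = (\<Sum>a\<leftarrow>zip xs (tl xs). elen E L a)"

definition path_edges :: "('v \<times> 'v) set \<Rightarrow> 'v list \<Rightarrow> ('v \<times> 'v) set" where
  "path_edges E xs = {e\<in>E. e \<in> set (zip xs (tl xs)) \<or> (snd e, fst e) \<in> set (zip xs (tl xs))}"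

definition network :: "'v set \<Rightarrow> ('v \<times> 'v) set \<Rightarrow> ('v \<times> 'v \<Rightarrow> real) \<Rightarrow> 'v \<Rightarrow> 'v \<Rightarrow> bool" where
  "network V E L s0 s1 \<longleftrightarrow> finite V \<and> E \<subseteq> V \<times> V
     \<and> (\<forall>(u,v)\<in>E. u \<noteq> v \<and> (v,u) \<notin> E)
     \<and> (\<forall>u\<in>V. \<forall>v\<in>V. (u,v) \<in> (E \<union> E\<inverse>)\<^sup>*)
     \<and> s0 \<in> V \<and> s1 \<in> V \<and> s0 \<noteq> s1
     \<and> (\<forall>e\<in>E. L e > 0)"

end

theory Submission
  imports Defs
begin


lemma telescope:
  fixes f :: "'a \<Rightarrow> real"
  shows "xs \<noteq> [] \<Longrightarrow> (\<Sum>(a,b)\<leftarrow>zip xs (tl xs). f a - f b) = f (hd xs) - f (last xs)"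
proof (induction xs)
  case Nil then show ?case by simp
next
  case (Cons x xs)
  show ?case
  proof (cases xs)
    case Nil then show ?thesis by simp
  next
    case (Cons y ys)
    then have "(\<Sum>(a,b)\<leftarrow>zip xs (tl xs). f a - f b) = f (hd xs) - f (last xs)"
      using Cons.IH by simp
    then show ?thesis using Cons by simp
  qed
qed

lemma path_len_tele:
  assumes "xs \<noteq> []" "set (zip xs (tl xs)) \<subseteq> R"
    "\<And>a b. (a,b)\<in>R \<Longrightarrow> elen E L (a,b) = f a - f b"
  shows "path_len E L xs = f (hd xs) - f (last xs)"
proof -
  have "path_len E L xs = (\<Sum>(a,b)\<leftarrow>zip xs (tl xs). f a - f b)"
    unfolding path_len_def
    by (rule arg_cong[where f=sum_list], rule map_cong) (use assms(2,3) in auto)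
  then show ?thesis using telescope[OF assms(1)] by simp
qed

lemma zip_append_tl:
  "xs \<noteq> [] \<Longrightarrow> ys \<noteq> [] \<Longrightarrow> last xs = hd ys \<Longrightarrow>
   zip (xs @ tl ys) (tl (xs @ tl ys)) = zip xs (tl xs) @ zip ys (tl ys)"
proof (induction xs)
  case Nil then show ?case by simp
next
  case (Cons x xs)
  show ?case
  proof (cases xs)
    case Nil
    obtain y ys' where "ys = y # ys'" using Cons.prems by (cases ys) auto
    then show ?thesis using Nil Cons.prems by simp
  next
    case (Cons y zs)
    then show ?thesis using Cons.IH Cons.prems by simp
  qed
qed

lemma walk_trancl:
  "set (zip xs (tl xs)) \<subseteq> r \<Longrightarrow> i < j \<Longrightarrow> j < length xs \<Longrightarrow> (xs!i, xs!j) \<in> r\<^sup>+"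
proof (induction j)
  case 0 then show ?case by simp
next
  case (Suc j)
  have "zip xs (tl xs) ! j \<in> set (zip xs (tl xs))"
    using Suc.prems by (intro nth_mem) simp
  moreover have "zip xs (tl xs) ! j = (xs!j, xs!Suc j)"
    using Suc.prems by (simp add: nth_tl)
  ultimately have step: "(xs!j, xs!Suc j) \<in> r" using Suc.prems by auto
  show ?case
  proof (cases "i = j")
    case True then show ?thesis using step by auto
  next
    case False
    then have "(xs!i, xs!j) \<in> r\<^sup>+" using Suc by auto
    then show ?thesis using step by (meson trancl_into_trancl)
  qed
qed

lemma walk_distinct:
  assumes "acyclic r" "set (zip xs (tl xs)) \<subseteq> r"
  shows "distinct xs"
proof -
  have "xs!i \<noteq> xs!j" if "i < j" "j < length xs" for i j
    using walk_trancl[OF assms(2) that] assms(1) unfolding acyclic_def by metis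
  then show ?thesis unfolding distinct_conv_nth
    by (metis linorder_neqE_nat)
qed

lemma rtrancl_walk:
  "(x,y)\<in>r\<^sup>* \<Longrightarrow> \<exists>xs. xs\<noteq>[] \<and> hd xs = x \<and> last xs = y \<and> set (zip xs (tl xs)) \<subseteq> r"
proof (induction rule: converse_rtrancl_induct)
  case base
  then show ?case by (intro exI[of _ "[y]"]) simp
next
  case (step x z)
  then obtain xs where xs: "xs\<noteq>[]" "hd xs = z" "last xs = y" "set (zip xs (tl xs)) \<subseteq> r" by blast
  then obtain ys where "xs = z # ys" by (cases xs) auto
  then show ?case using xs step by (intro exI[of _ "x # xs"]) auto
qed

lemma rtrancl_path:
  "acyclic r \<Longrightarrow> (x,y)\<in>r\<^sup>* \<Longrightarrow> \<exists>xs. is_path r x y xs"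
  unfolding is_path_def using rtrancl_walk walk_distinct by metis



definition nf :: "('v\<times>'v) set \<Rightarrow> ('v\<times>'v\<Rightarrow>real) \<Rightarrow> 'v \<Rightarrow> real" where
  "nf E Q v = (\<Sum>e\<in>{e\<in>E. fst e = v}. Q e) - (\<Sum>e\<in>{e\<in>E. snd e = v}. Q e)"

lemma unit_flow_nf: "is_unit_flow V E s0 s1 Q \<longleftrightarrow> (\<forall>v\<in>V. nf E Q v = bvec s0 s1 v)"
  by (simp add: is_unit_flow_def nf_def)

lemma sum_group_in:
  assumes "finite E" "finite S"
  shows "(\<Sum>v\<in>S. \<Sum>e\<in>{e\<in>E. g e = v}. Q e) = (\<Sum>e\<in>{e\<in>E. g e \<in> S}. Q e)"
proof -
  have "(\<Sum>e\<in>{e\<in>E. g e \<in> S}. Q e) = (\<Sum>v\<in>S. \<Sum>e\<in>{x. x \<in> {e\<in>E. g e \<in> S} \<and> g x = v}. Q e)"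
    by (rule sum.group[symmetric]) (use assms in auto)
  also have "\<dots> = (\<Sum>v\<in>S. \<Sum>e\<in>{e\<in>E. g e = v}. Q e)"
    by (rule sum.cong) (auto intro!: sum.cong)
  finally show ?thesis by simp
qed

lemma cut_sum:
  assumes "finite E" "finite S"
  shows "(\<Sum>v\<in>S. nf E Q v) = (\<Sum>e\<in>{e\<in>E. fst e \<in> S \<and> snd e \<notin> S}. Q e)
                               - (\<Sum>e\<in>{e\<in>E. snd e \<in> S \<and> fst e \<notin> S}. Q e)"
proof -
  have fin: "finite {e\<in>E. P e}" for P using assms(1) by simp
  have "(\<Sum>v\<in>S. nf E Q v) = (\<Sum>e\<in>{e\<in>E. fst e \<in> S}. Q e) - (\<Sum>e\<in>{e\<in>E. snd e \<in> S}. Q e)"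
    unfolding nf_def sum_subtractf using sum_group_in[OF assms, where g=fst and Q=Q] sum_group_in[OF assms, where g=snd and Q=Q] by simp
  also have "(\<Sum>e\<in>{e\<in>E. fst e \<in> S}. Q e) = (\<Sum>e\<in>{e\<in>E. fst e \<in> S \<and> snd e \<notin> S}. Q e)
       + (\<Sum>e\<in>{e\<in>E. fst e \<in> S \<and> snd e \<in> S}. Q e)"
    by (subst sum.union_disjoint[symmetric]) (auto intro: fin intro!: sum.cong)
  also have "(\<Sum>e\<in>{e\<in>E. snd e \<in> S}. Q e) = (\<Sum>e\<in>{e\<in>E. snd e \<in> S \<and> fst e \<notin> S}. Q e)
       + (\<Sum>e\<in>{e\<in>E. fst e \<in> S \<and> snd e \<in> S}. Q e)"
    by (subst sum.union_disjoint[symmetric]) (auto intro: fin intro!: sum.cong)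
  finally show ?thesis by simp
qed

lemma cut_nonneg:
  assumes "finite E" "finite S"
    "\<And>e. e\<in>E \<Longrightarrow> fst e \<in> S \<Longrightarrow> snd e \<notin> S \<Longrightarrow> Q e \<ge> 0"
    "\<And>e. e\<in>E \<Longrightarrow> snd e \<in> S \<Longrightarrow> fst e \<notin> S \<Longrightarrow> Q e \<le> 0"
  shows "(\<Sum>v\<in>S. nf E Q v) \<ge> 0"
proof -
  have "(\<Sum>e\<in>{e\<in>E. fst e \<in> S \<and> snd e \<notin> S}. Q e) \<ge> 0" by (rule sum_nonneg) (use assms in auto)
  moreover have "(\<Sum>e\<in>{e\<in>E. snd e \<in> S \<and> fst e \<notin> S}. Q e) \<le> 0" by (rule sum_nonpos) (use assms in auto)
  ultimately show ?thesis using cut_sum[OF assms(1,2), of Q] by simp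
qed

lemma cut_strict:
  assumes "finite E" "finite S"
    "\<And>e. e\<in>E \<Longrightarrow> fst e \<in> S \<Longrightarrow> snd e \<notin> S \<Longrightarrow> Q e \<ge> 0"
    "\<And>e. e\<in>E \<Longrightarrow> snd e \<in> S \<Longrightarrow> fst e \<notin> S \<Longrightarrow> Q e \<le> 0"
    "z \<in> E" "(fst z \<in> S \<and> snd z \<notin> S \<and> Q z > 0) \<or> (snd z \<in> S \<and> fst z \<notin> S \<and> Q z < 0)"
  shows "(\<Sum>v\<in>S. nf E Q v) > 0"
proof -
  let ?O = "{e\<in>E. fst e \<in> S \<and> snd e \<notin> S}" and ?I = "{e\<in>E. snd e \<in> S \<and> fst e \<notin> S}"
  have O: "sum Q ?O \<ge> 0" by (rule sum_nonneg) (use assms in auto)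
  have I: "sum Q ?I \<le> 0" by (rule sum_nonpos) (use assms in auto)
  have "sum Q ?O - sum Q ?I > 0"
    using assms(6)
  proof
    assume h: "fst z \<in> S \<and> snd z \<notin> S \<and> Q z > 0"
    have "Q z \<le> sum Q ?O" by (rule member_le_sum) (use assms h in auto)
    then show ?thesis using h I by simp
  next
    assume h: "snd z \<in> S \<and> fst z \<notin> S \<and> Q z < 0"
    have "- Q z \<le> sum (\<lambda>e. - Q e) ?I" by (rule member_le_sum) (use assms h in auto)
    then show ?thesis using h O by (simp add: sum_negf)
  qed
  then show ?thesis using cut_sum[OF assms(1,2), of Q] by simp
qed

lemma nf_neg: "nf E (\<lambda>e. - Q e) v = - nf E Q v"
  by (simp add: nf_def sum_negf)

lemma bvec_alt: "s0 \<noteq> s1 \<Longrightarrow> bvec s0 s1 v = (if v = s0 then 1 else 0) - (if v = s1 then 1 else 0)"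
  by (simp add: bvec_def)

lemma bvec_sum:
  assumes "finite S" "s0 \<noteq> s1"
  shows "(\<Sum>v\<in>S. bvec s0 s1 v) = (if s0\<in>S then 1 else 0) - (if s1 \<in> S then 1 else 0)"
  using assms by (simp add: bvec_alt sum_subtractf)

lemma network_facts:
  assumes "network V E L s0 s1"
  shows "finite V" "finite E" "E \<subseteq> V \<times> V" "\<And>u v. (u,v)\<in>E \<Longrightarrow> u \<noteq> v \<and> (v,u) \<notin> E"
    "s0 \<in> V" "s1 \<in> V" "s0 \<noteq> s1" "\<And>e. e\<in>E \<Longrightarrow> L e > 0"
  using assms unfolding network_def
  by (auto intro: finite_subset[of E "V\<times>V"])

lemma flow_cut:
  assumes "network V E L s0 s1" "is_unit_flow V E s0 s1 Q" "S \<subseteq> V"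
  shows "(\<Sum>v\<in>S. nf E Q v) = (if s0\<in>S then 1 else 0) - (if s1 \<in> S then 1 else 0)"
proof -
  have fS: "finite S" using network_facts(1)[OF assms(1)] assms(3) finite_subset by blast
  have "(\<Sum>v\<in>S. nf E Q v) = (\<Sum>v\<in>S. bvec s0 s1 v)"
    using assms(2,3) unfolding unit_flow_nf by (intro sum.cong) auto
  then show ?thesis using bvec_sum[OF fS network_facts(7)[OF assms(1)]] by simp
qed

lemma aux: "((x::real) - y) * d / l = - (d * (y - x) / l)"
  by (metis minus_diff_eq minus_divide_left mult.commute mult_minus_left)

lemma pot_iff: "is_potential V E L D s0 s1 p \<longleftrightarrow> is_unit_flow V E s0 s1 (elec_flow L D p)"
proof -
  have "(\<Sum>e\<in>{e\<in>E. fst e = v}. (p v - p (snd e)) * D e / L e)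
           + (\<Sum>e\<in>{e\<in>E. snd e = v}. (p v - p (fst e)) * D e / L e) = nf E (elec_flow L D p) v" for v
  proof -
    have "(\<Sum>e\<in>{e\<in>E. fst e = v}. (p v - p (snd e)) * D e / L e) = (\<Sum>e\<in>{e\<in>E. fst e = v}. elec_flow L D p e)"
      by (rule sum.cong) (auto simp: elec_flow_def)
    moreover have "(\<Sum>e\<in>{e\<in>E. snd e = v}. (p v - p (fst e)) * D e / L e) = (\<Sum>e\<in>{e\<in>E. snd e = v}. - elec_flow L D p e)"
      by (rule sum.cong) (auto simp: elec_flow_def aux)
    ultimately show ?thesis by (simp add: nf_def sum_negf)
  qed
  then show ?thesis by (simp add: is_potential_def unit_flow_nf)
qed

lemma unit_flow_cong:
  "(\<And>e. e\<in>E \<Longrightarrow> Q e = Q' e) \<Longrightarrow> is_unit_flow V E s0 s1 Q \<longleftrightarrow> is_unit_flow V E s0 s1 Q'"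
proof -
  assume a: "\<And>e. e\<in>E \<Longrightarrow> Q e = Q' e"
  have eq: "\<And>P. sum Q {e\<in>E. P e} = sum Q' {e\<in>E. P e}" by (rule sum.cong) (auto simp: a)
  show ?thesis unfolding is_unit_flow_def by (simp add: eq)
qed

lemma arc_char: "(a,b) \<in> flow_arcs E Q \<longleftrightarrow> ((a,b)\<in>E \<and> Q(a,b) > 0) \<or> ((b,a)\<in>E \<and> Q(b,a) < 0)"
  by (auto simp: flow_arcs_def)

lemma arcs_sub: "flow_arcs E Q \<subseteq> E \<union> E\<inverse>"
  by (auto simp: flow_arcs_def)

lemma acyclic_pot:
  fixes f :: "'a \<Rightarrow> real"
  assumes "\<And>a b. (a,b) \<in> r \<Longrightarrow> f a > f b"
  shows "acyclic r"
proof -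
  have "(x,y) \<in> r\<^sup>+ \<Longrightarrow> f x > f y" for x y
    by (induction rule: trancl_induct) (use assms in force)+
  then show ?thesis unfolding acyclic_def by blast
qed



lemma aux2:
  fixes d l x :: real
  assumes "d \<ge> 0" "l > 0" "d*x/l > 0" "d = d*x/l"
  shows "x > 0 \<and> x = l"
proof -
  have "d*x > 0" using assms(2,3) by (simp add: zero_less_divide_iff)
  then have "d > 0" "x > 0" using assms(1) by (auto simp: zero_less_mult_iff)
  moreover have "d*l = d*x" using assms(2,4) by (simp add: field_simps)
  ultimately show ?thesis by simp
qed

lemma aux3: "(d::real) * (x - y) / l = - (d * (y - x) / l)"
  by (metis aux mult.commute)

lemma arc_pot:
  assumes net: "network V E L s0 s1" and D0: "\<forall>e\<in>E. D e \<ge> 0"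
    and DQ: "\<forall>e\<in>E. D e = \<bar>elec_flow L D p e\<bar>"
    and arc: "(a,b) \<in> flow_arcs E (elec_flow L D p)"
  shows "p a > p b \<and> elen E L (a,b) = p a - p b"
  using arc unfolding arc_char
proof
  assume h: "(a,b)\<in>E \<and> elec_flow L D p (a,b) > 0"
  have "D (a,b) * (p a - p b) / L (a,b) > 0" using h by (simp add: elec_flow_def)
  moreover have "D (a,b) = D (a,b) * (p a - p b) / L (a,b)"
  proof -
    have "D (a,b) = \<bar>elec_flow L D p (a,b)\<bar>" using DQ h by blast
    then have "D (a,b) = elec_flow L D p (a,b)" using h by simp
    then show ?thesis by (simp add: elec_flow_def)
  qed
  ultimately have "p a - p b > 0 \<and> p a - p b = L (a,b)"
    using aux2 D0 h network_facts(8)[OF net] by blast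
  then show ?thesis using h by (simp add: elen_def)
next
  assume h: "(b,a)\<in>E \<and> elec_flow L D p (b,a) < 0"
  have "D (b,a) * (p a - p b) / L (b,a) > 0" using h
    by (simp add: elec_flow_def aux3[of "D (b,a)" "p a" "p b"])
  moreover have "D (b,a) = D (b,a) * (p a - p b) / L (b,a)"
  proof -
    have "D (b,a) = \<bar>elec_flow L D p (b,a)\<bar>" using DQ h by blast
    then have "D (b,a) = - elec_flow L D p (b,a)" using h by simp
    then show ?thesis by (simp add: elec_flow_def aux3[of "D (b,a)" "p a" "p b"])
  qed
  ultimately have "p a - p b > 0 \<and> p a - p b = L (b,a)"
    using aux2 D0 h network_facts(8)[OF net] by blast
  moreover have "(a,b) \<notin> E" using h network_facts(4)[OF net] by blast
  ultimately show ?thesis by (simp add: elen_def)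
qed

lemma B_fwd:
  assumes net: "network V E L s0 s1" and eq: "equilibrium V E L s0 s1 D"
  shows "\<exists>Q. is_unit_flow V E s0 s1 Q \<and> (\<forall>e\<in>E. D e = \<bar>Q e\<bar>)
             \<and> acyclic (flow_arcs E Q)
             \<and> (\<forall>xs ys. is_path (flow_arcs E Q) s0 s1 xs \<and> is_path (flow_arcs E Q) s0 s1 ys
                  \<longrightarrow> path_len E L xs = path_len E L ys)"
proof -
  obtain p where D0: "\<forall>e\<in>E. D e \<ge> 0" and pot: "is_potential V E L D s0 s1 p"
    and DQ: "\<forall>e\<in>E. D e = \<bar>elec_flow L D p e\<bar>"
    using eq unfolding equilibrium_def by blast
  let ?Q = "elec_flow L D p"
  have arcs: "\<And>a b. (a,b) \<in> flow_arcs E ?Q \<Longrightarrow> p a > p b \<and> elen E L (a,b) = p a - p b"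
    using arc_pot[OF net D0 DQ] by blast
  have "acyclic (flow_arcs E ?Q)" using arcs by (intro acyclic_pot[where f=p]) auto
  moreover have "path_len E L xs = p s0 - p s1" if "is_path (flow_arcs E ?Q) s0 s1 xs" for xs
    using that unfolding is_path_def using path_len_tele[where f=p and R="flow_arcs E ?Q"] arcs
    by metis
  ultimately show ?thesis using pot DQ unfolding pot_iff by (intro exI[of _ ?Q]) auto
qed


lemma A_part:
  assumes net: "network V E L s0 s1" and eq: "equilibrium V E L s0 s1 D"
  shows "Min (cut_cap E D ` st_cuts V s0 s1) = cut_cap E D {s0} \<and> cut_cap E D {s0} = 1"
proof -
  obtain p where D0: "\<forall>e\<in>E. D e \<ge> 0" and pot: "is_potential V E L D s0 s1 p"
    and DQ: "\<forall>e\<in>E. D e = \<bar>elec_flow L D p e\<bar>"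
    using eq unfolding equilibrium_def by blast
  define Q where "Q = elec_flow L D p"
  have uf: "is_unit_flow V E s0 s1 Q" using pot unfolding pot_iff Q_def .
  note nfacts = network_facts[OF net]
  have Qsign: "Q e > 0 \<Longrightarrow> p (fst e) > p (snd e)" "Q e < 0 \<Longrightarrow> p (fst e) < p (snd e)"
    if "e \<in> E" for e
  proof -
    have l: "L e > 0" using nfacts(8) that by blast
    have d: "D e \<ge> 0" using D0 that by blast
    show "Q e > 0 \<Longrightarrow> p (fst e) > p (snd e)"
      using l d by (auto simp: Q_def elec_flow_def zero_less_divide_iff zero_less_mult_iff)
    show "Q e < 0 \<Longrightarrow> p (fst e) < p (snd e)"
      using l d by (auto simp: Q_def elec_flow_def divide_less_0_iff mult_less_0_iff)
  qed
  define T where "T = {v\<in>V. p v > p s0}"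
  have TV: "T \<subseteq> V" unfolding T_def by blast
  have fT: "finite T" using nfacts(1) TV finite_subset by blast
  have sumT: "(\<Sum>v\<in>T. nf E Q v) \<le> 0"
    using flow_cut[OF net uf TV] by (simp add: T_def)
  have noT: "False" if "e \<in> E" "(fst e \<in> T \<and> snd e \<notin> T \<and> Q e > 0) \<or> (snd e \<in> T \<and> fst e \<notin> T \<and> Q e < 0)" for e
  proof -
    have "(\<Sum>v\<in>T. nf E Q v) > 0"
    proof (rule cut_strict[where Q=Q and S=T and z=e])
      show "finite E" by (rule nfacts(2))
      show "finite T" by (rule fT)
      show "e \<in> E" by (rule that(1))
      show "(fst e \<in> T \<and> snd e \<notin> T \<and> Q e > 0) \<or> (snd e \<in> T \<and> fst e \<notin> T \<and> Q e < 0)" by (rule that(2))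
    next
      fix e assume e: "e\<in>E" "fst e \<in> T" "snd e \<notin> T"
      then have "snd e \<in> V" using nfacts(3) by auto
      then have "p (snd e) < p (fst e)" using e unfolding T_def by auto
      then show "Q e \<ge> 0" using Qsign(2)[OF e(1)] by linarith
    next
      fix e assume e: "e\<in>E" "snd e \<in> T" "fst e \<notin> T"
      then have "fst e \<in> V" using nfacts(3) by auto
      then have "p (fst e) < p (snd e)" using e unfolding T_def by auto
      then show "Q e \<le> 0" using Qsign(1)[OF e(1)] by linarith
    qed
    then show False using sumT by simp
  qed
  have out0: "Q e \<ge> 0" if "e\<in>E" "fst e = s0" for e
  proof (rule ccontr)
    assume "\<not> Q e \<ge> 0"
    then have "Q e < 0" by simp
    moreover have "snd e \<in> V" using that nfacts(3) by auto
    ultimately have "snd e \<in> T" "fst e \<notin> T" using Qsign(2)[OF that(1)] that by (auto simp: T_def)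
    then show False using noT[OF that(1)] \<open>Q e < 0\<close> by blast
  qed
  have in0: "Q e \<le> 0" if "e\<in>E" "snd e = s0" for e
  proof (rule ccontr)
    assume "\<not> Q e \<le> 0"
    then have "Q e > 0" by simp
    moreover have "fst e \<in> V" using that nfacts(3) by auto
    ultimately have "fst e \<in> T" "snd e \<notin> T" using Qsign(1)[OF that(1)] that by (auto simp: T_def)
    then show False using noT[OF that(1)] \<open>Q e > 0\<close> by blast
  qed
  have DabsQ: "\<And>e. e\<in>E \<Longrightarrow> D e = \<bar>Q e\<bar>" using DQ Q_def by simp
  have fin: "finite {e\<in>E. P e}" for P using nfacts(2) by simp
  have cutcap: "cut_cap E D S = (\<Sum>e\<in>{e\<in>E. fst e \<in> S \<and> snd e \<notin> S}. \<bar>Q e\<bar>)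
        + (\<Sum>e\<in>{e\<in>E. snd e \<in> S \<and> fst e \<notin> S}. \<bar>Q e\<bar>)" for S
  proof -
    have ceq: "cut_edges E S = {e\<in>E. fst e \<in> S \<and> snd e \<notin> S} \<union> {e\<in>E. snd e \<in> S \<and> fst e \<notin> S}"
      unfolding cut_edges_def by auto
    have "cut_cap E D S = (\<Sum>e\<in>{e\<in>E. fst e \<in> S \<and> snd e \<notin> S} \<union> {e\<in>E. snd e \<in> S \<and> fst e \<notin> S}. \<bar>Q e\<bar>)"
      unfolding cut_cap_def ceq by (intro sum.cong refl) (auto simp: DabsQ)
    also have "\<dots> = (\<Sum>e\<in>{e\<in>E. fst e \<in> S \<and> snd e \<notin> S}. \<bar>Q e\<bar>)
        + (\<Sum>e\<in>{e\<in>E. snd e \<in> S \<and> fst e \<notin> S}. \<bar>Q e\<bar>)"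
      by (rule sum.union_disjoint, rule fin, rule fin, auto)
    finally show ?thesis .
  qed
  have s0cut: "{s0} \<in> st_cuts V s0 s1" using nfacts(5,7) by (simp add: st_cuts_def)
  have ge1: "cut_cap E D S \<ge> 1" if "S \<in> st_cuts V s0 s1" for S
  proof -
    have SV: "S \<subseteq> V" "s0 \<in> S" "s1 \<notin> S" using that by (auto simp: st_cuts_def)
    have fS: "finite S" using SV nfacts(1) finite_subset by blast
    have "1 = (\<Sum>v\<in>S. nf E Q v)" using flow_cut[OF net uf SV(1)] SV by simp
    also have "\<dots> = (\<Sum>e\<in>{e\<in>E. fst e \<in> S \<and> snd e \<notin> S}. Q e) - (\<Sum>e\<in>{e\<in>E. snd e \<in> S \<and> fst e \<notin> S}. Q e)"
      by (rule cut_sum[OF nfacts(2) fS])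
    also have "\<dots> \<le> cut_cap E D S"
    proof -
      have "(\<Sum>e\<in>{e\<in>E. fst e \<in> S \<and> snd e \<notin> S}. Q e) \<le> (\<Sum>e\<in>{e\<in>E. fst e \<in> S \<and> snd e \<notin> S}. \<bar>Q e\<bar>)"
        by (rule sum_mono) simp
      moreover have "(\<Sum>e\<in>{e\<in>E. snd e \<in> S \<and> fst e \<notin> S}. - Q e) \<le> (\<Sum>e\<in>{e\<in>E. snd e \<in> S \<and> fst e \<notin> S}. \<bar>Q e\<bar>)"
        by (rule sum_mono) simp
      ultimately show ?thesis unfolding cutcap by (simp add: sum_negf)
    qed
    finally show ?thesis .
  qed
  have c1: "cut_cap E D {s0} = 1"
  proof -
    have "1 = (\<Sum>v\<in>{s0}. nf E Q v)" using flow_cut[OF net uf, of "{s0}"] nfacts(5,7) by simp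
    also have "\<dots> = (\<Sum>e\<in>{e\<in>E. fst e \<in> {s0} \<and> snd e \<notin> {s0}}. Q e) - (\<Sum>e\<in>{e\<in>E. snd e \<in> {s0} \<and> fst e \<notin> {s0}}. Q e)"
      by (rule cut_sum[OF nfacts(2)]) simp
    also have "\<dots> = cut_cap E D {s0}"
    proof -
      have "(\<Sum>e\<in>{e\<in>E. fst e \<in> {s0} \<and> snd e \<notin> {s0}}. Q e) = (\<Sum>e\<in>{e\<in>E. fst e \<in> {s0} \<and> snd e \<notin> {s0}}. \<bar>Q e\<bar>)"
        by (rule sum.cong) (auto dest: out0)
      moreover have "(\<Sum>e\<in>{e\<in>E. snd e \<in> {s0} \<and> fst e \<notin> {s0}}. - Q e) = (\<Sum>e\<in>{e\<in>E. snd e \<in> {s0} \<and> fst e \<notin> {s0}}. \<bar>Q e\<bar>)"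
        by (rule sum.cong) (auto dest: in0)
      ultimately show ?thesis unfolding cutcap by (simp add: sum_negf)
    qed
    finally show ?thesis by simp
  qed
  have "Min (cut_cap E D ` st_cuts V s0 s1) = cut_cap E D {s0}"
  proof (rule Min_eqI)
    have "st_cuts V s0 s1 \<subseteq> Pow V" by (auto simp: st_cuts_def)
    then show "finite (cut_cap E D ` st_cuts V s0 s1)" using nfacts(1) finite_subset by blast
  next
    show "\<And>y. y \<in> cut_cap E D ` st_cuts V s0 s1 \<Longrightarrow> cut_cap E D {s0} \<le> y" using ge1 c1 by auto
  next
    show "cut_cap E D {s0} \<in> cut_cap E D ` st_cuts V s0 s1" using s0cut by blast
  qed
  then show ?thesis using c1 by simp
qed



lemma arcs_V: "network V E L s0 s1 \<Longrightarrow> flow_arcs E Q \<subseteq> V \<times> V"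
  using arcs_sub[of E Q] network_facts(3)[of V E L s0 s1] by blast

lemma reach:
  assumes net: "network V E L s0 s1" and uf: "is_unit_flow V E s0 s1 Q"
    and acyc: "acyclic (flow_arcs E Q)" and arc: "(a,b) \<in> flow_arcs E Q"
  shows "(b,s1) \<in> (flow_arcs E Q)\<^sup>*" "(s0,a) \<in> (flow_arcs E Q)\<^sup>*"
proof -
  let ?A = "flow_arcs E Q"
  note nfacts = network_facts[OF net]
  have AV: "?A \<subseteq> V \<times> V" by (rule arcs_V[OF net])
  have abV: "a \<in> V" "b \<in> V" using arc AV by auto
  have arcE: "(a,b)\<in>E \<and> Q(a,b) > 0 \<or> (b,a)\<in>E \<and> Q(b,a) < 0" using arc arc_char by metis
  show "(b,s1) \<in> ?A\<^sup>*"
  proof (rule ccontr)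
    assume ns: "(b,s1) \<notin> ?A\<^sup>*"
    define R where "R = {v\<in>V. (b,v)\<in>?A\<^sup>*}"
    have RV: "R \<subseteq> V" by (auto simp: R_def)
    have fR: "finite R" using RV nfacts(1) finite_subset by blast
    have aR: "a \<notin> R"
    proof
      assume "a \<in> R"
      then have "(b,a) \<in> ?A\<^sup>*" by (simp add: R_def)
      then have "(a,a) \<in> ?A\<^sup>+" using arc by (meson rtrancl_into_trancl2)
      then show False using acyc by (simp add: acyclic_def)
    qed
    have bR: "b \<in> R" using abV by (simp add: R_def)
    have "(\<Sum>v\<in>R. nf E (\<lambda>e. - Q e) v) > 0"
    proof (rule cut_strict[where Q="\<lambda>e. - Q e" and S=R])
      show "finite E" by (rule nfacts(2))
      show "finite R" by (rule fR)
    next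
      fix e assume e: "e\<in>E" "fst e \<in> R" "snd e \<notin> R"
      show "- Q e \<ge> 0"
      proof (rule ccontr)
        assume "\<not> - Q e \<ge> 0"
        then have "(fst e, snd e) \<in> ?A" using e(1) arc_char[of "fst e" "snd e" E Q] by auto
        moreover have "snd e \<in> V" using e(1) nfacts(3) by auto
        ultimately have "snd e \<in> R" using e(2) unfolding R_def by (blast intro: rtrancl_into_rtrancl)
        then show False using e by simp
      qed
    next
      fix e assume e: "e\<in>E" "snd e \<in> R" "fst e \<notin> R"
      show "- Q e \<le> 0"
      proof (rule ccontr)
        assume "\<not> - Q e \<le> 0"
        then have "(snd e, fst e) \<in> ?A" using e(1) arc_char[of "snd e" "fst e" E Q] by auto
        moreover have "fst e \<in> V" using e(1) nfacts(3) by auto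
        ultimately have "fst e \<in> R" using e(2) unfolding R_def by (blast intro: rtrancl_into_rtrancl)
        then show False using e by simp
      qed
    next
      show "(if (a,b)\<in>E \<and> Q(a,b) > 0 then (a,b) else (b,a)) \<in> E" using arcE by auto
      show "(fst (if (a,b)\<in>E \<and> Q(a,b) > 0 then (a,b) else (b,a)) \<in> R \<and>
             snd (if (a,b)\<in>E \<and> Q(a,b) > 0 then (a,b) else (b,a)) \<notin> R \<and>
             - Q (if (a,b)\<in>E \<and> Q(a,b) > 0 then (a,b) else (b,a)) > 0) \<or>
            (snd (if (a,b)\<in>E \<and> Q(a,b) > 0 then (a,b) else (b,a)) \<in> R \<and>
             fst (if (a,b)\<in>E \<and> Q(a,b) > 0 then (a,b) else (b,a)) \<notin> R \<and>
             - Q (if (a,b)\<in>E \<and> Q(a,b) > 0 then (a,b) else (b,a)) < 0)"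
        using arcE aR bR by auto
    qed
    moreover have "(\<Sum>v\<in>R. nf E Q v) \<ge> 0"
      using flow_cut[OF net uf RV] ns by (simp add: R_def)
    ultimately show False by (simp add: nf_neg sum_negf)
  qed
  show "(s0,a) \<in> ?A\<^sup>*"
  proof (rule ccontr)
    assume ns: "(s0,a) \<notin> ?A\<^sup>*"
    define R where "R = {v\<in>V. (v,a)\<in>?A\<^sup>*}"
    have RV: "R \<subseteq> V" by (auto simp: R_def)
    have fR: "finite R" using RV nfacts(1) finite_subset by blast
    have bR: "b \<notin> R"
    proof
      assume "b \<in> R"
      then have "(b,a) \<in> ?A\<^sup>*" by (simp add: R_def)
      then have "(a,a) \<in> ?A\<^sup>+" using arc by (meson rtrancl_into_trancl2)
      then show False using acyc by (simp add: acyclic_def)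
    qed
    have aR: "a \<in> R" using abV by (simp add: R_def)
    have "(\<Sum>v\<in>R. nf E Q v) > 0"
    proof (rule cut_strict[where Q="Q" and S=R])
      show "finite E" by (rule nfacts(2))
      show "finite R" by (rule fR)
    next
      fix e assume e: "e\<in>E" "fst e \<in> R" "snd e \<notin> R"
      show "Q e \<ge> 0"
      proof (rule ccontr)
        assume "\<not> Q e \<ge> 0"
        then have "(snd e, fst e) \<in> ?A" using e(1) arc_char[of "snd e" "fst e" E Q] by auto
        moreover have "snd e \<in> V" using e(1) nfacts(3) by auto
        ultimately have "snd e \<in> R" using e(2) unfolding R_def by (blast intro: converse_rtrancl_into_rtrancl)
        then show False using e by simp
      qed
    next
      fix e assume e: "e\<in>E" "snd e \<in> R" "fst e \<notin> R"
      show "Q e \<le> 0"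
      proof (rule ccontr)
        assume "\<not> Q e \<le> 0"
        then have "(fst e, snd e) \<in> ?A" using e(1) arc_char[of "fst e" "snd e" E Q] by auto
        moreover have "fst e \<in> V" using e(1) nfacts(3) by auto
        ultimately have "fst e \<in> R" using e(2) unfolding R_def by (blast intro: converse_rtrancl_into_rtrancl)
        then show False using e by simp
      qed
    next
      show "(if (a,b)\<in>E \<and> Q(a,b) > 0 then (a,b) else (b,a)) \<in> E" using arcE by auto
      show "(fst (if (a,b)\<in>E \<and> Q(a,b) > 0 then (a,b) else (b,a)) \<in> R \<and>
             snd (if (a,b)\<in>E \<and> Q(a,b) > 0 then (a,b) else (b,a)) \<notin> R \<and>
             Q (if (a,b)\<in>E \<and> Q(a,b) > 0 then (a,b) else (b,a)) > 0) \<or>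
            (snd (if (a,b)\<in>E \<and> Q(a,b) > 0 then (a,b) else (b,a)) \<in> R \<and>
             fst (if (a,b)\<in>E \<and> Q(a,b) > 0 then (a,b) else (b,a)) \<notin> R \<and>
             Q (if (a,b)\<in>E \<and> Q(a,b) > 0 then (a,b) else (b,a)) < 0)"
        using arcE aR bR by auto
    qed
    moreover have "(\<Sum>v\<in>R. nf E Q v) \<le> 0"
      using flow_cut[OF net uf RV] ns by (simp add: R_def)
    ultimately show False by simp
  qed
qed

lemma concat_path:
  assumes "acyclic A" "is_path A x y P" "is_path A y z xs"
  shows "is_path A x z (P @ tl xs) \<and> path_len E L (P @ tl xs) = path_len E L P + path_len E L xs"
proof -
  have ne: "P \<noteq> []" "xs \<noteq> []" and ly: "last P = hd xs" using assms(2,3) by (auto simp: is_path_def)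
  have z: "zip (P @ tl xs) (tl (P @ tl xs)) = zip P (tl P) @ zip xs (tl xs)"
    by (rule zip_append_tl[OF ne ly])
  have w: "set (zip (P @ tl xs) (tl (P @ tl xs))) \<subseteq> A"
    using assms(2,3) unfolding z by (auto simp: is_path_def)
  have last: "last (P @ tl xs) = z"
  proof (cases "tl xs = []")
    case True
    then have "xs = [hd xs]" using ne(2) by (cases xs) auto
    then show ?thesis using True assms(2,3) ly by (auto simp: is_path_def)
  next
    case False
    then show ?thesis using assms(3) ne by (auto simp: is_path_def last_tl)
  qed
  have "is_path A x z (P @ tl xs)"
    unfolding is_path_def using w walk_distinct[OF assms(1) w] last ne assms(2)
    by (auto simp: is_path_def)
  moreover have "path_len E L (P @ tl xs) = path_len E L P + path_len E L xs"
    unfolding path_len_def z by simp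
  ultimately show ?thesis by blast
qed


lemma B_rev:
  assumes net: "network V E L s0 s1" and D0: "\<forall>e\<in>E. D e \<ge> 0"
    and uf: "is_unit_flow V E s0 s1 Q" and DQ: "\<forall>e\<in>E. D e = \<bar>Q e\<bar>"
    and acyc: "acyclic (flow_arcs E Q)"
    and eqlen: "\<forall>xs ys. is_path (flow_arcs E Q) s0 s1 xs \<and> is_path (flow_arcs E Q) s0 s1 ys
                  \<longrightarrow> path_len E L xs = path_len E L ys"
  shows "equilibrium V E L s0 s1 D"
proof -
  let ?A = "flow_arcs E Q"
  note nfacts = network_facts[OF net]
  define p where "p v = (if (v,s1) \<in> ?A\<^sup>* then path_len E L (SOME xs. is_path ?A v s1 xs) else 0)" for v
  have len_eq: "path_len E L xs = path_len E L ys"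
    if h0: "(s0,a) \<in> ?A\<^sup>*" and h1: "is_path ?A a s1 xs" and h2: "is_path ?A a s1 ys" for a xs ys
  proof -
    obtain P where P: "is_path ?A s0 a P" using rtrancl_path[OF acyc h0] by blast
    have c1: "is_path ?A s0 s1 (P @ tl xs) \<and> path_len E L (P @ tl xs) = path_len E L P + path_len E L xs"
      by (rule concat_path[OF acyc P h1])
    have c2: "is_path ?A s0 s1 (P @ tl ys) \<and> path_len E L (P @ tl ys) = path_len E L P + path_len E L ys"
      by (rule concat_path[OF acyc P h2])
    have "path_len E L (P @ tl xs) = path_len E L (P @ tl ys)" using eqlen c1 c2 by blast
    then show ?thesis using c1 c2 by linarith
  qed
  have parc: "p a - p b = elen E L (a,b)" if ab: "(a,b) \<in> ?A" for a b
  proof -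
    have r1: "(b,s1) \<in> ?A\<^sup>*" and r0: "(s0,a) \<in> ?A\<^sup>*" using reach[OF net uf acyc ab] by auto
    have ra: "(a,s1) \<in> ?A\<^sup>*" using ab r1 by (meson converse_rtrancl_into_rtrancl)
    have "\<exists>xs. is_path ?A b s1 xs" by (rule rtrancl_path[OF acyc r1])
    then have ys: "is_path ?A b s1 (SOME xs. is_path ?A b s1 xs)" by (rule someI_ex)
    define ys where "ys = (SOME xs. is_path ?A b s1 xs)"
    have ab_ne: "a \<noteq> b" using ab acyc by (auto simp: acyclic_def)
    have pab: "is_path ?A a b [a,b]" using ab ab_ne by (simp add: is_path_def)
    have c: "is_path ?A a s1 ([a,b] @ tl ys) \<and> path_len E L ([a,b] @ tl ys) = path_len E L [a,b] + path_len E L ys"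
      using concat_path[OF acyc pab ys[folded ys_def]] by blast
    have "\<exists>xs. is_path ?A a s1 xs" by (rule rtrancl_path[OF acyc ra])
    then have xa: "is_path ?A a s1 (SOME xs. is_path ?A a s1 xs)" by (rule someI_ex)
    have "p a = path_len E L (SOME xs. is_path ?A a s1 xs)" using ra by (simp add: p_def)
    also have "\<dots> = path_len E L ([a,b] @ tl ys)" using len_eq[OF r0 xa] c by blast
    also have "\<dots> = elen E L (a,b) + p b" using c r1 by (simp add: p_def ys_def path_len_def)
    finally show ?thesis by simp
  qed
  have ef: "elec_flow L D p e = Q e" if e: "e \<in> E" for e
  proof -
    obtain u v where uv: "e = (u,v)" by (cases e)
    have l: "L e > 0" using nfacts(8) e by blast
    consider "Q e > 0" | "Q e < 0" | "Q e = 0" by linarith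
    then show ?thesis
    proof cases
      case 1
      then have "(u,v) \<in> ?A" using e uv by (auto simp: arc_char)
      then have "p u - p v = L e" using parc e uv by (simp add: elen_def)
      then show ?thesis using 1 DQ e l uv by (simp add: elec_flow_def)
    next
      case 2
      then have "(v,u) \<in> ?A" using e uv by (auto simp: arc_char)
      moreover have "(v,u) \<notin> E" using e uv nfacts(4) by blast
      ultimately have "p v - p u = L e" using parc e uv by (simp add: elen_def)
      then have "p u - p v = - L e" by simp
      then show ?thesis using 2 DQ e l uv by (simp add: elec_flow_def)
    next
      case 3
      then show ?thesis using DQ e by (simp add: elec_flow_def)
    qed
  qed
  have "is_potential V E L D s0 s1 p"
    unfolding pot_iff using uf unit_flow_cong[of E "elec_flow L D p" Q] ef by blast
  moreover have "\<forall>e\<in>E. D e = \<bar>elec_flow L D p e\<bar>" using DQ ef by simp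
  ultimately show ?thesis using D0 unfolding equilibrium_def by blast
qed



lemma zip_tl_nth:
  "(a,b) \<in> set (zip xs (tl xs)) \<longleftrightarrow> (\<exists>i. Suc i < length xs \<and> xs!i = a \<and> xs!Suc i = b)"
proof
  assume "(a,b) \<in> set (zip xs (tl xs))"
  then obtain n where "a = xs!n" "b = xs ! Suc n" "n < length xs - 1" by (auto simp: in_set_zip nth_tl)
  then show "\<exists>i. Suc i < length xs \<and> xs!i = a \<and> xs!Suc i = b" by (intro exI[of _ n]) auto
next
  assume "\<exists>i. Suc i < length xs \<and> xs!i = a \<and> xs!Suc i = b"
  then obtain i where "Suc i < length xs" "xs!i = a" "xs!Suc i = b" by blast
  then show "(a,b) \<in> set (zip xs (tl xs))" unfolding in_set_zip by (intro exI[of _ i]) (auto simp: nth_tl)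
qed

lemma distinct_take_mem:
  assumes "distinct xs" "i < length xs"
  shows "xs!i \<in> set (take m xs) \<longleftrightarrow> i < m"
proof
  assume "xs!i \<in> set (take m xs)"
  then obtain j where j: "j < length (take m xs)" "take m xs ! j = xs!i" by (auto simp: in_set_conv_nth)
  then have "xs!j = xs!i" "j < m" "j < length xs" by auto
  then show "i < m" using assms nth_eq_iff_index_eq by metis
next
  assume "i < m"
  then show "xs!i \<in> set (take m xs)" using assms(2) by (metis in_set_conv_nth length_take min_less_iff_conj nth_take)
qed

lemma is_path_mono: "is_path A x y xs \<Longrightarrow> A \<subseteq> B \<Longrightarrow> is_path B x y xs"
  by (auto simp: is_path_def)

lemma walk_V:
  assumes "set (zip xs (tl xs)) \<subseteq> A" "A \<subseteq> V \<times> V" "xs \<noteq> []" "hd xs \<in> V"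
  shows "set xs \<subseteq> V"
proof
  fix x assume "x \<in> set xs"
  then obtain i where i: "i < length xs" "xs!i = x" by (auto simp: in_set_conv_nth)
  show "x \<in> V"
  proof (cases i)
    case 0 then show ?thesis using i assms(3,4) by (simp add: hd_conv_nth)
  next
    case (Suc j)
    then have "(xs!j, xs!Suc j) \<in> set (zip xs (tl xs))" using i zip_tl_nth[of "xs!j" "xs!Suc j" xs] by auto
    then have "(xs!j, xs!Suc j) \<in> V \<times> V" using assms(1,2) by blast
    then show ?thesis using i Suc by simp
  qed
qed

lemma sum_single:
  assumes "\<And>e. e \<in> B \<Longrightarrow> e \<noteq> z \<Longrightarrow> f e = 0" "finite B"
  shows "sum f B = (if z \<in> B then f z else (0::real))"
proof -
  have "sum f B = (\<Sum>e\<in>B. if e = z then f z else 0)" by (rule sum.cong) (use assms in auto)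
  then show ?thesis using assms(2) by simp
qed

lemma C_fwd:
  assumes net: "network V E L s0 s1"
    and H: "\<forall>xs ys. is_path (E \<union> E\<inverse>) s0 s1 xs \<and> is_path (E \<union> E\<inverse>) s0 s1 ys \<and> xs \<noteq> ys
          \<longrightarrow> path_len E L xs \<noteq> path_len E L ys"
    and eq: "equilibrium V E L s0 s1 D"
  shows "\<exists>xs. is_path (E \<union> E\<inverse>) s0 s1 xs \<and> (\<forall>e\<in>E. D e = (if e \<in> path_edges E xs then 1 else 0))"
proof -
  note nfacts = network_facts[OF net]
  obtain Q where uf: "is_unit_flow V E s0 s1 Q" and DQ: "\<forall>e\<in>E. D e = \<bar>Q e\<bar>"
    and acyc: "acyclic (flow_arcs E Q)"
    and eqlen: "\<forall>xs ys. is_path (flow_arcs E Q) s0 s1 xs \<and> is_path (flow_arcs E Q) s0 s1 ys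
                  \<longrightarrow> path_len E L xs = path_len E L ys"
    using B_fwd[OF net eq] by blast
  let ?A = "flow_arcs E Q"
  have AV: "?A \<subseteq> V \<times> V" by (rule arcs_V[OF net])
  have uniq: "xs = ys" if "is_path ?A s0 s1 xs" "is_path ?A s0 s1 ys" for xs ys
    using H eqlen that is_path_mono[OF _ arcs_sub] by metis
  have "(s0,s1) \<in> ?A\<^sup>*"
  proof (rule ccontr)
    assume ns: "(s0,s1) \<notin> ?A\<^sup>*"
    define R where "R = {v\<in>V. (s0,v)\<in>?A\<^sup>*}"
    have RV: "R \<subseteq> V" by (auto simp: R_def)
    have fR: "finite R" using RV nfacts(1) finite_subset by blast
    have "(\<Sum>v\<in>R. nf E (\<lambda>e. - Q e) v) \<ge> 0"
    proof (rule cut_nonneg[OF nfacts(2) fR])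
      fix e assume e: "e\<in>E" "fst e \<in> R" "snd e \<notin> R"
      show "- Q e \<ge> 0"
      proof (rule ccontr)
        assume "\<not> - Q e \<ge> 0"
        then have "(fst e, snd e) \<in> ?A" using e(1) arc_char[of "fst e" "snd e" E Q] by auto
        moreover have "snd e \<in> V" using e(1) nfacts(3) by auto
        ultimately have "snd e \<in> R" using e(2) unfolding R_def by (blast intro: rtrancl_into_rtrancl)
        then show False using e by simp
      qed
    next
      fix e assume e: "e\<in>E" "snd e \<in> R" "fst e \<notin> R"
      show "- Q e \<le> 0"
      proof (rule ccontr)
        assume "\<not> - Q e \<le> 0"
        then have "(snd e, fst e) \<in> ?A" using e(1) arc_char[of "snd e" "fst e" E Q] by auto
        moreover have "fst e \<in> V" using e(1) nfacts(3) by auto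
        ultimately have "fst e \<in> R" using e(2) unfolding R_def by (blast intro: rtrancl_into_rtrancl)
        then show False using e by simp
      qed
    qed
    moreover have "s0 \<in> R" using nfacts(5) by (simp add: R_def)
    moreover have "s1 \<notin> R" using ns by (simp add: R_def)
    ultimately show False using flow_cut[OF net uf RV] by (simp add: nf_neg sum_negf)
  qed
  then obtain xs where xs: "is_path ?A s0 s1 xs" using rtrancl_path[OF acyc] by blast
  let ?Z = "set (zip xs (tl xs))"
  have ZA: "?Z \<subseteq> ?A" using xs by (simp add: is_path_def)
  have dxs: "distinct xs" and nexs: "xs \<noteq> []" and hxs: "hd xs = s0" and lxs: "last xs = s1"
    using xs by (auto simp: is_path_def)
  have AZ: "(a,b) \<in> ?Z" if ab: "(a,b) \<in> ?A" for a b
  proof -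
    have r1: "(b,s1) \<in> ?A\<^sup>*" and r0: "(s0,a) \<in> ?A\<^sup>*" using reach[OF net uf acyc ab] by auto
    obtain P1 where P1: "is_path ?A s0 a P1" using rtrancl_path[OF acyc r0] by blast
    obtain P2 where P2: "is_path ?A b s1 P2" using rtrancl_path[OF acyc r1] by blast
    have ab_ne: "a \<noteq> b" using ab acyc by (auto simp: acyclic_def)
    have pab: "is_path ?A a b [a,b]" using ab ab_ne by (simp add: is_path_def)
    have Y: "is_path ?A a s1 ([a,b] @ tl P2)" using concat_path[OF acyc pab P2] by blast
    have W: "is_path ?A s0 s1 (P1 @ tl ([a,b] @ tl P2))" using concat_path[OF acyc P1 Y] by blast
    then have "P1 @ tl ([a,b] @ tl P2) = xs" using uniq xs by blast
    moreover have "zip (P1 @ tl ([a,b] @ tl P2)) (tl (P1 @ tl ([a,b] @ tl P2)))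
        = zip P1 (tl P1) @ zip ([a,b] @ tl P2) (tl ([a,b] @ tl P2))"
      by (rule zip_append_tl) (use P1 Y in \<open>auto simp: is_path_def\<close>)
    moreover have "(a,b) \<in> set (zip ([a,b] @ tl P2) (tl ([a,b] @ tl P2)))" by simp
    ultimately show ?thesis by (metis Un_iff set_append)
  qed
  have xsV: "set xs \<subseteq> V" using walk_V[OF _ AV nexs] ZA hxs nfacts(5) by blast
  have val: "\<bar>Q e\<bar> = 1" if e: "e \<in> E" and z: "(a,b) \<in> ?Z" and ez: "e = (a,b) \<or> e = (b,a)" for e a b
  proof -
    obtain k where k: "Suc k < length xs" "xs!k = a" "xs!Suc k = b" using z zip_tl_nth by metis
    define S where "S = set (take (Suc k) xs)"
    have SV: "S \<subseteq> V" using xsV by (auto simp: S_def dest: in_set_takeD)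
    have fS: "finite S" by (simp add: S_def)
    have memS: "i < length xs \<Longrightarrow> xs!i \<in> S \<longleftrightarrow> i < Suc k" for i
      unfolding S_def by (rule distinct_take_mem[OF dxs])
    have s0S: "s0 \<in> S" using memS[of 0] k nexs hxs by (simp add: hd_conv_nth)
    have s1S: "s1 \<notin> S" using memS[of "length xs - 1"] k nexs lxs by (simp add: last_conv_nth)
    have aS: "a \<in> S" and bS: "b \<notin> S" using memS k by auto
    have one: "1 = (\<Sum>e\<in>{e\<in>E. fst e \<in> S \<and> snd e \<notin> S}. Q e) - (\<Sum>e\<in>{e\<in>E. snd e \<in> S \<and> fst e \<notin> S}. Q e)"
      using flow_cut[OF net uf SV] s0S s1S cut_sum[OF nfacts(2) fS, of Q] by simp
    have arcZ: "\<exists>i. Suc i < length xs \<and> xs!i = u \<and> xs!Suc i = w" if "(u,w) \<in> ?A" for u w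
      using AZ[OF that] zip_tl_nth by metis
    have o: "(\<Sum>e\<in>{e\<in>E. fst e \<in> S \<and> snd e \<notin> S}. Q e) = (if (a,b) \<in> E then Q (a,b) else 0)"
    proof -
      have "Q e' = 0" if e': "e' \<in> {e\<in>E. fst e \<in> S \<and> snd e \<notin> S}" "e' \<noteq> (a,b)" for e'
      proof (rule ccontr)
        assume nz: "Q e' \<noteq> 0"
        show False
        proof (cases "Q e' > 0")
          case True
          then have "(fst e', snd e') \<in> ?A" using e' arc_char[of "fst e'" "snd e'" E Q] by auto
          then obtain i where i: "Suc i < length xs" "xs!i = fst e'" "xs!Suc i = snd e'" using arcZ by blast
          then have "i < Suc k" "\<not> Suc i < Suc k" using memS[of i] memS[of "Suc i"] e' by auto
          then have "i = k" by simp
          then show False using i k e' by (metis prod.collapse)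
        next
          case False
          then have "Q e' < 0" using nz by simp
          then have "(snd e', fst e') \<in> ?A" using e' arc_char[of "snd e'" "fst e'" E Q] by auto
          then obtain i where i: "Suc i < length xs" "xs!i = snd e'" "xs!Suc i = fst e'" using arcZ by blast
          then have "\<not> i < Suc k" "Suc i < Suc k" using memS[of i] memS[of "Suc i"] e' by auto
          then show False by simp
        qed
      qed
      then have "(\<Sum>e\<in>{e\<in>E. fst e \<in> S \<and> snd e \<notin> S}. Q e) = (if (a,b) \<in> {e\<in>E. fst e \<in> S \<and> snd e \<notin> S} then Q (a,b) else 0)"
        by (intro sum_single) (use nfacts(2) in auto)
      then show ?thesis using aS bS by simp
    qed
    have i: "(\<Sum>e\<in>{e\<in>E. snd e \<in> S \<and> fst e \<notin> S}. Q e) = (if (b,a) \<in> E then Q (b,a) else 0)"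
    proof -
      have "Q e' = 0" if e': "e' \<in> {e\<in>E. snd e \<in> S \<and> fst e \<notin> S}" "e' \<noteq> (b,a)" for e'
      proof (rule ccontr)
        assume nz: "Q e' \<noteq> 0"
        show False
        proof (cases "Q e' > 0")
          case True
          then have "(fst e', snd e') \<in> ?A" using e' arc_char[of "fst e'" "snd e'" E Q] by auto
          then obtain i where i: "Suc i < length xs" "xs!i = fst e'" "xs!Suc i = snd e'" using arcZ by blast
          then have "\<not> i < Suc k" "Suc i < Suc k" using memS[of i] memS[of "Suc i"] e' by auto
          then show False by simp
        next
          case False
          then have "Q e' < 0" using nz by simp
          then have "(snd e', fst e') \<in> ?A" using e' arc_char[of "snd e'" "fst e'" E Q] by auto
          then obtain i where i: "Suc i < length xs" "xs!i = snd e'" "xs!Suc i = fst e'" using arcZ by blast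
          then have "i < Suc k" "\<not> Suc i < Suc k" using memS[of i] memS[of "Suc i"] e' by auto
          then have "i = k" by simp
          then show False using i k e' by (metis prod.collapse)
        qed
      qed
      then have "(\<Sum>e\<in>{e\<in>E. snd e \<in> S \<and> fst e \<notin> S}. Q e) = (if (b,a) \<in> {e\<in>E. snd e \<in> S \<and> fst e \<notin> S} then Q (b,a) else 0)"
        by (intro sum_single) (use nfacts(2) in auto)
      then show ?thesis using aS bS by simp
    qed
    have abA: "(a,b) \<in> ?A" using z ZA by blast
    show ?thesis
    proof (cases "e = (a,b)")
      case True
      then have "(a,b) \<in> E" using e by simp
      then have "(b,a) \<notin> E" using nfacts(4) by blast
      then show ?thesis using one o i True \<open>(a,b) \<in> E\<close> by simp
    next
      case False
      then have "e = (b,a)" using ez by simp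
      then have "(b,a) \<in> E" using e by simp
      then have "(a,b) \<notin> E" using nfacts(4) by blast
      moreover have "Q (b,a) < 0" using abA \<open>(a,b) \<notin> E\<close> arc_char by metis
      ultimately show ?thesis using one o i \<open>e = (b,a)\<close> \<open>(b,a) \<in> E\<close> by simp
    qed
  qed
  have "D e = (if e \<in> path_edges E xs then 1 else 0)" if e: "e\<in>E" for e
  proof (cases "e \<in> path_edges E xs")
    case True
    then have "e \<in> ?Z \<or> (snd e, fst e) \<in> ?Z" by (simp add: path_edges_def)
    then obtain a b where "(a,b) \<in> ?Z" "e = (a,b) \<or> e = (b,a)" by (metis prod.collapse)
    then show ?thesis using val[OF e] DQ e True by auto
  next
    case False
    have "Q e = 0"
    proof (rule ccontr)
      assume nz: "Q e \<noteq> 0"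
      have "(fst e, snd e) \<in> ?A \<or> (snd e, fst e) \<in> ?A"
        using nz e arc_char[of "fst e" "snd e" E Q] arc_char[of "snd e" "fst e" E Q]
        by (cases "Q e > 0") auto
      then have "e \<in> ?Z \<or> (snd e, fst e) \<in> ?Z" using AZ[of "fst e" "snd e"] AZ[of "snd e" "fst e"] by auto
      then show False using False e by (simp add: path_edges_def)
    qed
    then show ?thesis using DQ e False by simp
  qed
  moreover have "is_path (E \<union> E\<inverse>) s0 s1 xs" using is_path_mono[OF xs arcs_sub] .
  ultimately show ?thesis by blast
qed



lemma path_len_Cons: "ys \<noteq> [] \<Longrightarrow> path_len E L (x # ys) = elen E L (x, hd ys) + path_len E L ys"
  by (cases ys) (auto simp: path_len_def)

lemma C_rev:
  fixes V :: "'v set" and E :: "('v \<times> 'v) set"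
  assumes net: "network V E L s0 s1" and xs: "is_path (E \<union> E\<inverse>) s0 s1 xs"
    and DD: "\<forall>e\<in>E. D e = (if e \<in> path_edges E xs then 1 else 0)"
  shows "equilibrium V E L s0 s1 D"
proof -
  note nfacts = network_facts[OF net]
  let ?Z = "set (zip xs (tl xs))"
  have dxs: "distinct xs" and nexs: "xs \<noteq> []" and hxs: "hd xs = s0" and lxs: "last xs = s1"
    and ZE: "?Z \<subseteq> E \<union> E\<inverse>"
    using xs by (auto simp: is_path_def)
  have no_both: "(b,a) \<notin> ?Z" if ab: "(a,b) \<in> ?Z" for a b
  proof
    assume "(b,a) \<in> ?Z"
    then obtain j where j: "Suc j < length xs" "xs!j = b" "xs!Suc j = a" unfolding zip_tl_nth by blast
    obtain i where i: "Suc i < length xs" "xs!i = a" "xs!Suc i = b" using ab unfolding zip_tl_nth by blast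
    have "i = Suc j" using nth_eq_iff_index_eq[OF dxs, of i "Suc j"] i j by auto
    moreover have "Suc i = j" using nth_eq_iff_index_eq[OF dxs, of "Suc i" j] i j by auto
    ultimately show False by simp
  qed
  define Q where "Q e = (if e \<in> ?Z then 1 else if (snd e, fst e) \<in> ?Z then -1 else (0::real))" for e
  have D0: "\<forall>e\<in>E. D e \<ge> 0" using DD by simp
  have DQ: "\<forall>e\<in>E. D e = \<bar>Q e\<bar>" using DD by (auto simp: Q_def path_edges_def)
  have arcsZ: "flow_arcs E Q \<subseteq> ?Z" by (auto simp: flow_arcs_def Q_def split: if_splits)
  define idx where "idx v = (THE i. i < length xs \<and> xs!i = v)" for v
  have idx_nth: "idx (xs!i) = i" if "i < length xs" for i
    unfolding idx_def by (rule the_equality) (use that dxs nth_eq_iff_index_eq in auto)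
  have Zidx: "\<exists>i. Suc i < length xs \<and> a = xs!i \<and> b = xs!Suc i" if "(a,b) \<in> ?Z" for a b
    using that unfolding zip_tl_nth by blast
  have acZ: "acyclic ?Z"
  proof (rule acyclic_pot[where f="\<lambda>v. - real (idx v)"])
    fix a b assume "(a,b) \<in> ?Z"
    then obtain i where "Suc i < length xs" "a = xs!i" "b = xs!Suc i" using Zidx by blast
    then show "- real (idx a) > - real (idx b)" using idx_nth by simp
  qed
  have acyc: "acyclic (flow_arcs E Q)" by (rule acyclic_subset[OF acZ arcsZ])
  define g where "g v = path_len E L (drop (idx v) xs)" for v
  have gZ: "elen E L (a,b) = g a - g b" if ab: "(a,b) \<in> ?Z" for a b
  proof -
    obtain i where i: "Suc i < length xs" "a = xs!i" "b = xs!Suc i" using Zidx[OF ab] by blast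
    have "drop i xs = xs!i # drop (Suc i) xs" using i by (simp add: Cons_nth_drop_Suc)
    moreover have "drop (Suc i) xs \<noteq> []" "hd (drop (Suc i) xs) = xs!Suc i"
      using i by (auto simp: hd_drop_conv_nth)
    ultimately have "path_len E L (drop i xs) = elen E L (a,b) + path_len E L (drop (Suc i) xs)"
      using path_len_Cons[of "drop (Suc i) xs" E L "xs!i"] i by simp
    then show ?thesis using i idx_nth by (simp add: g_def)
  qed
  have eqlen: "\<forall>ys zs. is_path (flow_arcs E Q) s0 s1 ys \<and> is_path (flow_arcs E Q) s0 s1 zs
                  \<longrightarrow> path_len E L ys = path_len E L zs"
  proof (intro allI impI)
    fix ys zs assume h: "is_path (flow_arcs E Q) s0 s1 ys \<and> is_path (flow_arcs E Q) s0 s1 zs"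
    have "path_len E L ws = g s0 - g s1" if "is_path (flow_arcs E Q) s0 s1 ws" for ws
      using path_len_tele[where R="flow_arcs E Q" and f=g] that gZ arcsZ unfolding is_path_def
      by blast
    then show "path_len E L ys = path_len E L zs" using h by simp
  qed
  define chi where "chi z e = (if e = z then 1 else 0) - (if e = (snd z, fst z) then 1 else (0::real))" for z e :: "'v \<times> 'v"
  have fZ: "finite ?Z" by simp
  have Qsum: "Q = (\<lambda>e. \<Sum>z\<in>?Z. chi z e)"
  proof
    fix e :: "'v \<times> 'v"
    have sw: "\<And>z. (e = (snd z, fst z)) = ((snd e, fst e) = z)" by auto
    have "(\<Sum>z\<in>?Z. chi z e) = (\<Sum>z\<in>?Z. if e = z then 1 else 0) - (\<Sum>z\<in>?Z. if (snd e, fst e) = z then 1 else 0)"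
      unfolding chi_def sum_subtractf sw ..
    also have "\<dots> = (if e \<in> ?Z then 1 else 0) - (if (snd e, fst e) \<in> ?Z then 1 else 0)"
      by simp
    also have "\<dots> = Q e" using no_both[of "fst e" "snd e"] by (auto simp: Q_def)
    finally show "Q e = (\<Sum>z\<in>?Z. chi z e)" by simp
  qed
  have nf_lin: "nf E (\<lambda>e. \<Sum>z\<in>?Z. chi z e) v = (\<Sum>z\<in>?Z. nf E (chi z) v)" for v
    unfolding nf_def
    by (subst sum.swap, subst sum.swap, simp add: sum_subtractf)
  have nf_chi: "nf E (chi z) v = (if fst z = v then 1 else 0) - (if snd z = v then 1 else 0)"
    if z: "z \<in> ?Z" for z v
  proof -
    have fin: "finite {e\<in>E. P e}" for P using nfacts(2) by simp
    have s1: "(\<Sum>e\<in>{e\<in>E. P e}. chi z e) = (if z \<in> {e\<in>E. P e} then 1 else 0)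
          - (if (snd z, fst z) \<in> {e\<in>E. P e} then 1 else 0)" for P
      unfolding chi_def sum_subtractf using fin[of P] by simp
    have "z \<in> E \<or> (snd z, fst z) \<in> E" using z ZE by auto
    moreover have "\<not> (z \<in> E \<and> (snd z, fst z) \<in> E)" using nfacts(4)[of "fst z" "snd z"] by auto
    ultimately show ?thesis unfolding nf_def s1 by auto
  qed
  have uf: "is_unit_flow V E s0 s1 Q"
    unfolding unit_flow_nf
  proof
    fix v assume "v \<in> V"
    have "nf E Q v = (\<Sum>z\<in>?Z. (\<lambda>(a,b). (if a = v then 1 else 0) - (if b = v then 1 else (0::real))) z)"
      unfolding Qsum nf_lin by (rule sum.cong) (auto simp: nf_chi)
    also have "\<dots> = (\<Sum>(a,b)\<leftarrow>zip xs (tl xs). (if a = v then 1 else 0) - (if b = v then 1 else (0::real)))"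
      by (rule sum_list_distinct_conv_sum_set[symmetric]) (rule distinct_zipI1[OF dxs])
    also have "\<dots> = (if hd xs = v then 1 else 0) - (if last xs = v then 1 else 0)"
      by (rule telescope[OF nexs, where f="\<lambda>a. if a = v then 1 else 0"])
    also have "\<dots> = bvec s0 s1 v" using hxs lxs nfacts(7) by (auto simp: bvec_def)
    finally show "nf E Q v = bvec s0 s1 v" .
  qed
  show ?thesis by (rule B_rev[OF net D0 uf DQ acyc eqlen])
qed


theorem mainTheorem3:
  fixes V :: "'v set" and E :: "('v \<times> 'v) set" and L :: "'v \<times> 'v \<Rightarrow> real"
    and s0 s1 :: 'v
  assumes "network V E L s0 s1"
  shows
    "(\<forall>D. equilibrium V E L s0 s1 D \<longrightarrow>
        Min (cut_cap E D ` st_cuts V s0 s1) = cut_cap E D {s0} \<and> cut_cap E D {s0} = 1)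
   \<and> (\<forall>D. (\<forall>e\<in>E. D e \<ge> 0) \<longrightarrow>
        (equilibrium V E L s0 s1 D \<longleftrightarrow>
          (\<exists>Q. is_unit_flow V E s0 s1 Q \<and> (\<forall>e\<in>E. D e = \<bar>Q e\<bar>)
             \<and> acyclic (flow_arcs E Q)
             \<and> (\<forall>xs ys. is_path (flow_arcs E Q) s0 s1 xs \<and> is_path (flow_arcs E Q) s0 s1 ys
                  \<longrightarrow> path_len E L xs = path_len E L ys))))
   \<and> ((\<forall>xs ys. is_path (E \<union> E\<inverse>) s0 s1 xs \<and> is_path (E \<union> E\<inverse>) s0 s1 ys \<and> xs \<noteq> ys
          \<longrightarrow> path_len E L xs \<noteq> path_len E L ys)
       \<longrightarrow> (\<forall>D. equilibrium V E L s0 s1 D \<longleftrightarrow>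
              (\<exists>xs. is_path (E \<union> E\<inverse>) s0 s1 xs \<and>
                 (\<forall>e\<in>E. D e = (if e \<in> path_edges E xs then 1 else 0)))))"
proof (intro conjI allI impI)
  fix D :: "'v \<times> 'v \<Rightarrow> real" assume "equilibrium V E L s0 s1 D"
  then show "Min (cut_cap E D ` st_cuts V s0 s1) = cut_cap E D {s0}" "cut_cap E D {s0} = 1"
    using A_part[OF assms] by auto
next
  fix D :: "'v \<times> 'v \<Rightarrow> real" assume D0: "\<forall>e\<in>E. D e \<ge> 0"
  show "equilibrium V E L s0 s1 D \<longleftrightarrow>
          (\<exists>Q. is_unit_flow V E s0 s1 Q \<and> (\<forall>e\<in>E. D e = \<bar>Q e\<bar>)
             \<and> acyclic (flow_arcs E Q)
             \<and> (\<forall>xs ys. is_path (flow_arcs E Q) s0 s1 xs \<and> is_path (flow_arcs E Q) s0 s1 ys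
                  \<longrightarrow> path_len E L xs = path_len E L ys))"
    using B_fwd[OF assms] B_rev[OF assms D0] by blast
next
  fix D :: "'v \<times> 'v \<Rightarrow> real"
  assume H: "\<forall>xs ys. is_path (E \<union> E\<inverse>) s0 s1 xs \<and> is_path (E \<union> E\<inverse>) s0 s1 ys \<and> xs \<noteq> ys
          \<longrightarrow> path_len E L xs \<noteq> path_len E L ys"
  show "equilibrium V E L s0 s1 D \<longleftrightarrow>
              (\<exists>xs. is_path (E \<union> E\<inverse>) s0 s1 xs \<and>
                 (\<forall>e\<in>E. D e = (if e \<in> path_edges E xs then 1 else 0)))"
    using C_fwd[OF assms H] C_rev[OF assms] by blast
qed

end
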